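(* Let $\mathcal{H}$ be a real Hilbert space with norm $\|\cdot\|$. Let $c>0$, $\alpha\in[0,1)$ and $\gamma(t)=\frac{c}{(1+t)^\alpha}$. Let $\omega:[0,+\infty)\to\mathcal{H}$ be a measurable function satisfying $\int_0^{+\infty}\frac{1}{\gamma(t)}\|\omega(t)\|\,dt<+\infty$. If $y\in W^{2,1}_{loc}(0,+\infty;\mathcal{H})$ is a solution of the differential equation $$\ddot y(t)+\gamma(t)\dot y(t)=\omega(t),$$ then $y(t)$ converges strongly in $\mathcal{H}$ as $t\to+\infty$.
   Context: $W^{2,1}_{loc}(0,+\infty;\mathcal{H})$ denotes functions whose first and second (weak) derivatives are locally integrable with values in $\mathcal{H}$; $\dot y,\ddot y$ denote the first and second time derivatives. *)

theory Defs
  imports "HOL-Analysis.Analysis"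
begin

end

theory Submission
  imports Defs
begin


lemma swap_borel:
  fixes f k :: "real \<Rightarrow> real" and a b :: real
  assumes ab: "a \<le> b" and fm: "f \<in> borel_measurable borel"
    and fi: "set_integrable lborel {a..b} f" and kc: "continuous_on {a..b} k"
  shows "integral {a..b} (\<lambda>t. k t * integral {a..t} f) = integral {a..b} (\<lambda>r. f r * integral {r..b} k)"
proof -
  define k0 where "k0 t = indicator {a..b} t *\<^sub>R k t" for t
  define f0 where "f0 r = indicator {a..b} r * f r" for r
  define F where "F t r = k0 t * f0 r * indicator {(t,r). r \<le> t} (t,r)" for t r :: real
  have k0m[measurable]: "k0 \<in> borel_measurable borel"
    unfolding k0_def by (rule borel_measurable_continuous_on_indicator[OF _ kc]) auto
  have f0m[measurable]: "f0 \<in> borel_measurable borel" unfolding f0_def using fm by measurable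
  have f0i: "integrable lborel f0" using fi unfolding f0_def set_integrable_def by simp
  obtain B where B: "\<And>t. \<bar>k0 t\<bar> \<le> B"
  proof -
    have "compact (k ` {a..b})" by (rule compact_continuous_image[OF kc]) auto
    then obtain B0 where "\<forall>x\<in>k ` {a..b}. norm x \<le> B0" using compact_imp_bounded bounded_iff by metis
    then have "\<bar>k0 t\<bar> \<le> max 0 B0" for t unfolding k0_def by (auto simp: indicator_def intro: max.coboundedI2)
    then show ?thesis using that by blast
  qed
  have Fm[measurable]: "(\<lambda>(t,r). F t r) \<in> borel_measurable (lborel \<Otimes>\<^sub>M lborel)"
    unfolding F_def by measurable
  have Fi: "integrable (lborel \<Otimes>\<^sub>M lborel) (\<lambda>(t,r). F t r)"
  proof (rule lborel_pair.Fubini_integrable)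
    show "(\<lambda>(t,r). F t r) \<in> borel_measurable (lborel \<Otimes>\<^sub>M lborel)" by (rule Fm)
    show "integrable lborel (\<lambda>t. \<integral>r. norm ((\<lambda>(t,r). F t r) (t, r)) \<partial>lborel)"
    proof (rule Bochner_Integration.integrable_bound)
      show "integrable lborel (\<lambda>t. indicator {a..b} t * (B * \<integral>r. \<bar>f0 r\<bar> \<partial>lborel))"
        by (intro integrable_mult_left integrable_real_indicator) (auto simp: emeasure_lborel_Icc_eq)
      show "(\<lambda>t. \<integral>r. norm ((\<lambda>(t,r). F t r) (t, r)) \<partial>lborel) \<in> borel_measurable lborel"
        by measurable
      show "AE t in lborel. norm (\<integral>r. norm ((\<lambda>(t,r). F t r) (t, r)) \<partial>lborel) \<le> norm (indicator {a..b} t * (B * \<integral>r. \<bar>f0 r\<bar> \<partial>lborel))"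
      proof (intro AE_I2)
        fix t
        have Fb: "norm (F t r) \<le> \<bar>k0 t\<bar> * \<bar>f0 r\<bar>" for r
          unfolding F_def by (auto simp: indicator_def abs_mult)
        have i1: "integrable lborel (\<lambda>r. \<bar>k0 t\<bar> * \<bar>f0 r\<bar>)"
          using f0i by (intro integrable_mult_right integrable_abs)
        have i2: "integrable lborel (\<lambda>r. norm (F t r))"
        proof (rule Bochner_Integration.integrable_bound[OF i1])
          show "(\<lambda>r. norm (F t r)) \<in> borel_measurable lborel" unfolding F_def by measurable
          show "AE r in lborel. norm (norm (F t r)) \<le> norm (\<bar>k0 t\<bar> * \<bar>f0 r\<bar>)" using Fb by (auto simp: abs_mult)
        qed
        have "(\<integral>r. norm (F t r) \<partial>lborel) \<le> (\<integral>r. \<bar>k0 t\<bar> * \<bar>f0 r\<bar> \<partial>lborel)"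
          by (rule integral_mono[OF i2 i1 Fb])
        also have "\<dots> = \<bar>k0 t\<bar> * (\<integral>r. \<bar>f0 r\<bar> \<partial>lborel)" by simp
        finally have le: "(\<integral>r. norm (F t r) \<partial>lborel) \<le> \<bar>k0 t\<bar> * (\<integral>r. \<bar>f0 r\<bar> \<partial>lborel)" .
        have nn: "0 \<le> (\<integral>r. \<bar>f0 r\<bar> \<partial>lborel)" by simp
        have "\<bar>k0 t\<bar> * (\<integral>r. \<bar>f0 r\<bar> \<partial>lborel) \<le> indicator {a..b} t * (B * \<integral>r. \<bar>f0 r\<bar> \<partial>lborel)"
          using B[of t] nn by (cases "t \<in> {a..b}") (auto simp: k0_def intro: mult_right_mono)
        moreover have "0 \<le> (\<integral>r. norm (F t r) \<partial>lborel)" by simp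
        ultimately show "norm (\<integral>r. norm ((\<lambda>(t,r). F t r) (t, r)) \<partial>lborel) \<le> norm (indicator {a..b} t * (B * \<integral>r. \<bar>f0 r\<bar> \<partial>lborel))"
          using le by simp
      qed
    qed
    show "AE t in lborel. integrable lborel (\<lambda>r. (\<lambda>(t,r). F t r) (t, r))"
    proof (intro AE_I2)
      fix t
      have Fb: "norm (F t r) \<le> norm (k0 t * f0 r)" for r
        unfolding F_def by (auto simp: indicator_def abs_mult)
      show "integrable lborel (\<lambda>r. (\<lambda>(t,r). F t r) (t, r))"
        using Bochner_Integration.integrable_bound[OF integrable_mult_right[OF f0i, of "k0 t"], of "\<lambda>r. F t r"] Fb
        by (auto simp: F_def)
    qed
  qed
  have fint: "f integrable_on {a..b}" using set_borel_integral_eq_integral(1)[OF fi] .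
  have inner1: "(\<integral>r. F t r \<partial>lborel) = indicator {a..b} t * (k t * integral {a..t} f)" for t
  proof (cases "t \<in> {a..b}")
    case False then show ?thesis by (simp add: F_def k0_def)
  next
    case True
    have "F t r = k t * (indicator {a..t} r * f r)" for r
      using True by (auto simp: F_def k0_def f0_def indicator_def)
    then have "(\<integral>r. F t r \<partial>lborel) = k t * (\<integral>r. indicator {a..t} r * f r \<partial>lborel)" by simp
    also have "(\<integral>r. indicator {a..t} r * f r \<partial>lborel) = integral {a..t} f"
    proof -
      have si: "set_integrable lborel {a..t} f" by (rule set_integrable_subset[OF fi]) (use True in auto)
      show ?thesis using set_borel_integral_eq_integral(2)[OF si] by (simp add: set_lebesgue_integral_def)
    qed
    finally show ?thesis using True by simp
  qed
  have inner2: "(\<integral>t. F t r \<partial>lborel) = indicator {a..b} r * (f r * integral {r..b} k)" for r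
  proof (cases "r \<in> {a..b}")
    case False then show ?thesis by (simp add: F_def f0_def)
  next
    case True
    have "F t r = f r * (indicator {r..b} t * k t)" for t
      using True by (auto simp: F_def k0_def f0_def indicator_def)
    then have "(\<integral>t. F t r \<partial>lborel) = f r * (\<integral>t. indicator {r..b} t * k t \<partial>lborel)" by simp
    also have "(\<integral>t. indicator {r..b} t * k t \<partial>lborel) = integral {r..b} k"
    proof -
      have si: "set_integrable lborel {r..b} k"
        by (rule borel_integrable_atLeastAtMost', rule continuous_on_subset[OF kc]) (use True in auto)
      show ?thesis using set_borel_integral_eq_integral(2)[OF si] by (simp add: set_lebesgue_integral_def)
    qed
    finally show ?thesis using True by simp
  qed
  have "(\<integral>r. (\<integral>t. F t r \<partial>lborel) \<partial>lborel) = (\<integral>t. (\<integral>r. F t r \<partial>lborel) \<partial>lborel)"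
    by (rule lborel_pair.Fubini_integral[OF Fi])
  then have eq: "(\<integral>r. indicator {a..b} r * (f r * integral {r..b} k) \<partial>lborel) = (\<integral>t. indicator {a..b} t * (k t * integral {a..t} f) \<partial>lborel)"
    by (simp add: inner1 inner2)
  have s1: "set_integrable lborel {a..b} (\<lambda>t. k t * integral {a..t} f)"
    by (rule borel_integrable_atLeastAtMost', intro continuous_intros kc indefinite_integral_continuous_1 fint)
  have "integrable lborel (\<lambda>r. \<integral>t. F t r \<partial>lborel)"
    using lborel_pair.integrable_fst'[OF lborel_pair.integrable_product_swap[OF Fi]] by simp
  then have s2: "set_integrable lborel {a..b} (\<lambda>r. f r * integral {r..b} k)"
    unfolding set_integrable_def by (simp add: inner2)
  show ?thesis
    using eq set_borel_integral_eq_integral(2)[OF s1] set_borel_integral_eq_integral(2)[OF s2]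
    by (simp add: set_lebesgue_integral_def)
qed

lemma swap_abs:
  fixes f k :: "real \<Rightarrow> real" and a b :: real
  assumes ab: "a \<le> b" and fi: "f absolutely_integrable_on {a..b}" and kc: "continuous_on {a..b} k"
  shows "integral {a..b} (\<lambda>t. k t * integral {a..t} f) = integral {a..b} (\<lambda>r. f r * integral {r..b} k)"
proof -
  define f1 where "f1 x = indicator {a..b} x * f x" for x
  have f1i: "integrable lebesgue f1" using fi unfolding f1_def set_integrable_def by simp
  then have "f1 \<in> borel_measurable (completion lborel)" by auto
  then obtain g where gm: "g \<in> borel_measurable lborel" and ae: "AE x in lborel. f1 x = g x"
    using completion_ex_borel_measurable_real by blast
  have "integrable lebesgue g"
  proof (rule integrable_cong_AE_imp[OF f1i])
    show "g \<in> borel_measurable lebesgue" using gm by (rule measurable_completion)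
    show "AE x in lebesgue. f1 x = g x" using ae by (rule AE_completion)
  qed
  then have gi: "integrable lborel g" using integrable_completion gm by blast
  have gsi: "set_integrable lborel {a..b} g"
    unfolding set_integrable_def by (rule integrable_mult_indicator[OF _ gi]) auto
  obtain N where N: "{x. f1 x \<noteq> g x} \<subseteq> N" "N \<in> null_sets lborel"
    using AE_E[OF ae] by (metis (no_types, lifting) Collect_cong UNIV_I null_setsI space_borel space_lborel)
  have negN: "negligible N" using N(2) by (simp add: negligible_iff_null_sets null_sets_completionI)
  have fg: "f x = g x" if "x \<in> {a..b} - N" for x
  proof -
    have "x \<notin> {x. f1 x \<noteq> g x}" using that N(1) by blast
    then show ?thesis using that by (simp add: f1_def)
  qed
  have I1: "integral {a..t} f = integral {a..t} g" if "t \<in> {a..b}" for t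
    by (rule integral_spike[OF negN]) (use that fg in auto)
  have "integral {a..b} (\<lambda>t. k t * integral {a..t} f) = integral {a..b} (\<lambda>t. k t * integral {a..t} g)"
    by (rule integral_cong) (simp add: I1)
  also have "\<dots> = integral {a..b} (\<lambda>r. g r * integral {r..b} k)"
    by (rule swap_borel[OF ab _ gsi kc]) (use gm in auto)
  also have "\<dots> = integral {a..b} (\<lambda>r. f r * integral {r..b} k)"
    by (rule integral_spike[OF negN]) (use fg in auto)
  finally show ?thesis .
qed



lemma cont_mult_abs:
  fixes h f :: "real \<Rightarrow> real"
  assumes h: "continuous_on {a..b} h" and f: "f absolutely_integrable_on {a..b}"
  shows "(\<lambda>x. h x * f x) absolutely_integrable_on {a..b}"
proof (rule absolutely_integrable_bounded_measurable_product_real)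
  show "h \<in> borel_measurable (lebesgue_on {a..b})"
    by (rule continuous_imp_measurable_on_sets_lebesgue[OF h]) auto
  show "bounded (h ` {a..b})" by (rule compact_imp_bounded, rule compact_continuous_image[OF h]) auto
qed (use f in auto)

lemma scalar_bound:
  fixes u w m \<gamma> \<Gamma> :: "real \<Rightarrow> real" and a t K :: real
  assumes at: "a \<le> t"
    and gc: "continuous_on {a..t} \<gamma>"
    and GD: "\<And>x. x \<in> {a..t} \<Longrightarrow> (\<Gamma> has_real_derivative \<gamma> x * \<Gamma> x) (at x within {a..t})"
    and uc: "continuous_on {a..t} u"
    and ui: "\<And>s. s \<in> {a..t} \<Longrightarrow> ((\<lambda>v. w v - \<gamma> v * u v) has_integral (u s - u a)) {a..s}"
    and mi: "m absolutely_integrable_on {a..t}"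
    and wb: "\<And>v. v \<in> {a..t} \<Longrightarrow> \<bar>w v\<bar> \<le> K * m v"
    and K: "K \<ge> 0"
    and gp: "\<And>x. x \<in> {a..t} \<Longrightarrow> 0 \<le> \<gamma> x" and Gp: "\<And>x. x \<in> {a..t} \<Longrightarrow> 0 < \<Gamma> x"
  shows "\<Gamma> t * u t \<le> \<Gamma> a * \<bar>u a\<bar> + K * integral {a..t} (\<lambda>r. \<Gamma> r * m r)"
proof -
  define W where "W v = integral {a..v} w" for v
  define M where "M v = integral {a..v} m" for v
  define P where "P v = integral {a..v} (\<lambda>r. \<Gamma> r * m r)" for v
  have Gc: "continuous_on {a..t} \<Gamma>"
    using GD by (meson DERIV_continuous continuous_at_imp_continuous_on continuous_on_eq_continuous_within)
  have gui: "(\<lambda>v. \<gamma> v * u v) integrable_on {a..s}" if "s \<in> {a..t}" for s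
    by (rule integrable_continuous_real, rule continuous_on_subset[of "{a..t}"]) (use that gc uc in \<open>auto intro!: continuous_intros\<close>)
  have wi: "w integrable_on {a..s}" if "s \<in> {a..t}" for s
  proof -
    have "(\<lambda>v. (w v - \<gamma> v * u v) + \<gamma> v * u v) integrable_on {a..s}"
      by (rule integrable_add) (use ui[OF that] gui[OF that] in auto)
    then show ?thesis by simp
  qed
  have mint: "m integrable_on {a..t}" using mi set_lebesgue_integral_eq_integral(1) by blast
  have ueq: "u s = u a + W s - integral {a..s} (\<lambda>v. \<gamma> v * u v)" if "s \<in> {a..t}" for s
  proof -
    have "((\<lambda>v. w v - \<gamma> v * u v) has_integral (W s - integral {a..s} (\<lambda>v. \<gamma> v * u v))) {a..s}"
      unfolding W_def by (intro has_integral_diff integrable_integral wi gui that)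
    from has_integral_unique[OF this ui[OF that]] show ?thesis by simp
  qed
  define Z where "Z v = \<Gamma> v * (u a - integral {a..v} (\<lambda>x. \<gamma> x * u x))" for v
  have ZD: "(Z has_vector_derivative (- (\<gamma> v * \<Gamma> v * W v))) (at v within {a..t})" if "v \<in> {a..t}" for v
  proof -
    have i: "((\<lambda>v. integral {a..v} (\<lambda>x. \<gamma> x * u x)) has_vector_derivative \<gamma> v * u v) (at v within {a..t})"
      by (rule integral_has_vector_derivative[OF _ that]) (use gc uc in \<open>auto intro!: continuous_intros\<close>)
    have d1: "((\<lambda>v. u a - integral {a..v} (\<lambda>x. \<gamma> x * u x)) has_real_derivative (0 - \<gamma> v * u v)) (at v within {a..t})"
      by (rule DERIV_diff[OF DERIV_const]) (use i in \<open>simp add: has_real_derivative_iff_has_vector_derivative\<close>)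
    have "(Z has_real_derivative (\<gamma> v * \<Gamma> v) * (u a - integral {a..v} (\<lambda>x. \<gamma> x * u x)) + (0 - \<gamma> v * u v) * \<Gamma> v) (at v within {a..t})"
      unfolding Z_def by (rule DERIV_mult[OF GD[OF that] d1])
    moreover have "(\<gamma> v * \<Gamma> v) * (u a - integral {a..v} (\<lambda>x. \<gamma> x * u x)) + (0 - \<gamma> v * u v) * \<Gamma> v = - (\<gamma> v * \<Gamma> v * W v)"
    proof -
      have e: "u a - integral {a..v} (\<lambda>x. \<gamma> x * u x) = u v - W v" using ueq[OF that] by simp
      show ?thesis unfolding e by (simp add: algebra_simps)
    qed
    ultimately show ?thesis by (simp add: has_real_derivative_iff_has_vector_derivative)
  qed
  have ZI: "((\<lambda>v. - (\<gamma> v * \<Gamma> v * W v)) has_integral Z t - Z a) {a..t}"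
    by (rule fundamental_theorem_of_calculus[OF at ZD])
  have Za: "Z a = \<Gamma> a * u a" unfolding Z_def by simp
  have Zt: "Z t = \<Gamma> t * (u t - W t)" unfolding Z_def using ueq[of t] at by simp
  define I1 where "I1 = integral {a..t} (\<lambda>v. \<gamma> v * \<Gamma> v * W v)"
  have I1i: "((\<lambda>v. \<gamma> v * \<Gamma> v * W v) has_integral I1) {a..t}"
    unfolding I1_def using ZI by (metis has_integral_integrable_integral integrable_neg_iff)
  have I1v: "I1 = Z a - Z t"
    using has_integral_unique[OF has_integral_neg[OF I1i] ZI] by simp
  have GI: "((\<lambda>v. \<gamma> v * \<Gamma> v) has_integral \<Gamma> s - \<Gamma> r) {r..s}" if "a \<le> r" "r \<le> s" "s \<le> t" for r s
    by (rule fundamental_theorem_of_calculus[OF that(2)])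
       (use that in \<open>auto simp: has_real_derivative_iff_has_vector_derivative[symmetric] intro!: DERIV_subset[OF GD]\<close>)
  have Wc: "continuous_on {a..t} W" unfolding W_def by (rule indefinite_integral_continuous_1[OF wi]) (use at in auto)
  have Mc: "continuous_on {a..t} M" unfolding M_def by (rule indefinite_integral_continuous_1[OF mint])
  have Wdiff: "\<bar>W t - W v\<bar> \<le> K * (M t - M v)" if "v \<in> {a..t}" for v
  proof -
    have "W t - W v = integral {v..t} w"
      unfolding W_def using Henstock_Kurzweil_Integration.integral_combine[of a v t w] wi[of t] that at by auto
    moreover have "M t - M v = integral {v..t} m"
      unfolding M_def using Henstock_Kurzweil_Integration.integral_combine[of a v t m] mint that at by auto
    moreover have "norm (integral {v..t} w) \<le> integral {v..t} (\<lambda>x. K * m x)"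
    proof (rule Henstock_Kurzweil_Integration.integral_norm_bound_integral)
      show "w integrable_on {v..t}" by (rule integrable_on_subinterval[OF wi[of t]]) (use that at in auto)
      show "(\<lambda>x. K * m x) integrable_on {v..t}"
        using integrable_cmul[OF integrable_on_subinterval[OF mint, of v t], of K] that by simp
      show "norm (w x) \<le> K * m x" if "x \<in> {v..t}" for x using wb[of x] that \<open>v \<in> {a..t}\<close> by auto
    qed
    ultimately show ?thesis by simp
  qed
  have Wt: "\<bar>W t\<bar> \<le> K * M t" using Wdiff[of a] at by (simp add: W_def M_def)
  have e0: "\<Gamma> t * u t = \<Gamma> a * u a + \<Gamma> t * W t - I1" using I1v Za Zt by (simp add: algebra_simps)
  have e1: "\<Gamma> t * W t - I1 = \<Gamma> a * W t + integral {a..t} (\<lambda>v. \<gamma> v * \<Gamma> v * (W t - W v))"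
  proof -
    have "((\<lambda>v. \<gamma> v * \<Gamma> v * (W t - W v)) has_integral ((\<Gamma> t - \<Gamma> a) * W t - I1)) {a..t}"
      using has_integral_diff[OF has_integral_mult_left[OF GI[OF order.refl at order.refl], of "W t"] I1i]
      by (simp add: algebra_simps)
    then show ?thesis by (simp add: integral_unique algebra_simps)
  qed
  have e2: "integral {a..t} (\<lambda>v. \<gamma> v * \<Gamma> v * (W t - W v)) \<le> integral {a..t} (\<lambda>v. K * (\<gamma> v * \<Gamma> v * (M t - M v)))"
  proof (rule integral_le)
    show "(\<lambda>v. \<gamma> v * \<Gamma> v * (W t - W v)) integrable_on {a..t}"
      by (rule integrable_continuous_real) (use gc Gc Wc in \<open>auto intro!: continuous_intros\<close>)
    show "(\<lambda>v. K * (\<gamma> v * \<Gamma> v * (M t - M v))) integrable_on {a..t}"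
      by (rule integrable_continuous_real) (use gc Gc Mc in \<open>auto intro!: continuous_intros\<close>)
    fix v assume v: "v \<in> {a..t}"
    have gG: "0 \<le> \<gamma> v * \<Gamma> v" using gp[OF v] Gp[OF v] by simp
    have "\<gamma> v * \<Gamma> v * (W t - W v) \<le> \<gamma> v * \<Gamma> v * (K * (M t - M v))"
      using Wdiff[OF v] gG by (intro mult_left_mono) auto
    then show "\<gamma> v * \<Gamma> v * (W t - W v) \<le> K * (\<gamma> v * \<Gamma> v * (M t - M v))" by (simp add: algebra_simps)
  qed
  have Jc: "continuous_on {a..t} (\<lambda>v. \<gamma> v * \<Gamma> v * M v)" using gc Gc Mc by (auto intro!: continuous_intros)
  have e3: "integral {a..t} (\<lambda>v. K * (\<gamma> v * \<Gamma> v * (M t - M v))) = K * ((\<Gamma> t - \<Gamma> a) * M t - integral {a..t} (\<lambda>v. \<gamma> v * \<Gamma> v * M v))"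
  proof -
    have "((\<lambda>v. K * (\<gamma> v * \<Gamma> v * M t - \<gamma> v * \<Gamma> v * M v)) has_integral K * ((\<Gamma> t - \<Gamma> a) * M t - integral {a..t} (\<lambda>v. \<gamma> v * \<Gamma> v * M v))) {a..t}"
      by (intro has_integral_mult_right has_integral_diff has_integral_mult_left GI integrable_integral integrable_continuous_real Jc) (use at in auto)
    then show ?thesis by (simp add: integral_unique algebra_simps)
  qed
  have Pm: "(\<lambda>r. \<Gamma> r * m r) integrable_on {a..t}"
    using cont_mult_abs[OF Gc mi] set_lebesgue_integral_eq_integral(1) by blast
  have e4: "integral {a..t} (\<lambda>v. \<gamma> v * \<Gamma> v * M v) = \<Gamma> t * M t - integral {a..t} (\<lambda>r. \<Gamma> r * m r)"
  proof -
    have "integral {a..t} (\<lambda>v. \<gamma> v * \<Gamma> v * M v) = integral {a..t} (\<lambda>r. m r * integral {r..t} (\<lambda>v. \<gamma> v * \<Gamma> v))"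
      unfolding M_def by (rule swap_abs[OF at mi]) (use gc Gc in \<open>auto intro!: continuous_intros\<close>)
    also have "\<dots> = integral {a..t} (\<lambda>r. \<Gamma> t * m r - \<Gamma> r * m r)"
    proof (rule integral_cong)
      fix r assume "r \<in> {a..t}"
      then have "integral {r..t} (\<lambda>v. \<gamma> v * \<Gamma> v) = \<Gamma> t - \<Gamma> r" using GI[of r t] by (auto intro: integral_unique)
      then show "m r * integral {r..t} (\<lambda>v. \<gamma> v * \<Gamma> v) = \<Gamma> t * m r - \<Gamma> r * m r" by (simp add: right_diff_distrib mult.commute)
    qed
    also have "\<dots> = \<Gamma> t * M t - integral {a..t} (\<lambda>r. \<Gamma> r * m r)"
      unfolding M_def using integrable_cmul[OF mint, of "\<Gamma> t"] Pm by (subst integral_diff) auto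
    finally show ?thesis .
  qed
  have "\<Gamma> t * u t \<le> \<Gamma> a * \<bar>u a\<bar> + \<Gamma> a * (K * M t) + K * ((\<Gamma> t - \<Gamma> a) * M t - (\<Gamma> t * M t - integral {a..t} (\<lambda>r. \<Gamma> r * m r)))"
  proof -
    have "\<Gamma> a * u a \<le> \<Gamma> a * \<bar>u a\<bar>" using Gp[of a] at by (intro mult_left_mono) auto
    moreover have "\<Gamma> a * W t \<le> \<Gamma> a * (K * M t)" using Gp[of a] at Wt by (intro mult_left_mono) auto
    moreover have e34: "integral {a..t} (\<lambda>v. K * (\<gamma> v * \<Gamma> v * (M t - M v))) = K * ((\<Gamma> t - \<Gamma> a) * M t - (\<Gamma> t * M t - integral {a..t} (\<lambda>r. \<Gamma> r * m r)))"
      using e3 e4 by simp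
    ultimately show ?thesis using e0 e1 e2 by linarith
  qed
  also have "\<dots> = \<Gamma> a * \<bar>u a\<bar> + K * integral {a..t} (\<lambda>r. \<Gamma> r * m r)" by (simp add: algebra_simps)
  finally show ?thesis .
qed


lemma int_norm_bound:
  fixes f :: "real \<Rightarrow> 'a::real_inner"
  assumes fi: "(f has_integral d) {v..u}" and ni: "(\<lambda>x. norm (f x)) integrable_on {v..u}"
  shows "norm d \<le> integral {v..u} (\<lambda>x. norm (f x))"
proof -
  define B where "B = integral {v..u} (\<lambda>x. norm (f x))"
  have B0: "0 \<le> B" unfolding B_def by (rule integral_nonneg[OF ni]) auto
  have "inner d d \<le> norm d * B"
  proof -
    have "((\<lambda>x. inner d (f x)) has_integral inner d d) {v..u}"
      using has_integral_linear[OF fi bounded_linear_inner_right[of d]] by (simp add: o_def)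
    moreover have "((\<lambda>x. norm d * norm (f x)) has_integral norm d * B) {v..u}"
      unfolding B_def by (intro has_integral_mult_right integrable_integral ni)
    moreover have "inner d (f x) \<le> norm d * norm (f x)" for x by (rule norm_cauchy_schwarz)
    ultimately show ?thesis by (rule has_integral_le)
  qed
  then have "norm d * norm d \<le> norm d * B" by (simp add: dot_square_norm power2_eq_square)
  then have "norm d \<le> B" using B0 by (cases "norm d = 0") (auto simp: mult_le_cancel_left)
  then show ?thesis unfolding B_def .
qed

lemma cont_dom:
  fixes f :: "real \<Rightarrow> 'a::metric_space" and g :: "real \<Rightarrow> real"
  assumes g: "continuous_on S g" and d: "\<And>u v. u \<in> S \<Longrightarrow> v \<in> S \<Longrightarrow> dist (f u) (f v) \<le> dist (g u) (g v)"
  shows "continuous_on S f"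
  unfolding continuous_on_iff
proof (intro ballI allI impI)
  fix x e assume x: "x \<in> S" and e: "(0::real) < e"
  then obtain r where r: "r > 0" "\<forall>x'\<in>S. dist x' x < r \<longrightarrow> dist (g x') (g x) < e"
    using g unfolding continuous_on_iff by blast
  show "\<exists>r>0. \<forall>x'\<in>S. dist x' x < r \<longrightarrow> dist (f x') (f x) < e"
    using r d x by (meson le_less_trans)
qed



lemma gam_pos: "c > 0 \<Longrightarrow> 0 \<le> (t::real) \<Longrightarrow> 0 < c / (1 + t) powr \<alpha>"
  by simp

lemma gam_le: "c > 0 \<Longrightarrow> 0 \<le> \<alpha> \<Longrightarrow> 0 \<le> (t::real) \<Longrightarrow> c / (1 + t) powr \<alpha> \<le> c"
proof -
  assume "c > 0" "0 \<le> \<alpha>" "0 \<le> t"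
  then have "1 \<le> (1 + t) powr \<alpha>" by (simp add: ge_one_powr_ge_zero)
  then show ?thesis using \<open>c > 0\<close> by (simp add: divide_le_eq)
qed

lemma gam_mono: "c > 0 \<Longrightarrow> 0 \<le> \<alpha> \<Longrightarrow> 0 \<le> (s::real) \<Longrightarrow> s \<le> t \<Longrightarrow> c / (1 + t) powr \<alpha> \<le> c / (1 + s) powr \<alpha>"
  by (intro divide_left_mono powr_mono2) auto

lemma G_deriv:
  fixes c \<alpha> t :: real
  assumes "\<alpha> < 1" "t > -1"
  shows "((\<lambda>t. c * (1 + t) powr (1 - \<alpha>) / (1 - \<alpha>)) has_real_derivative c / (1 + t) powr \<alpha>) (at t within X)"
proof -
  have "((\<lambda>t. c * (1 + t) powr (1 - \<alpha>) / (1 - \<alpha>)) has_real_derivative c * ((1 - \<alpha>) * (1 + t) powr (1 - \<alpha> - 1) * 1) / (1 - \<alpha>)) (at t within X)"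
    using assms by (auto intro!: derivative_eq_intros)
  moreover have "c * ((1 - \<alpha>) * (1 + t) powr (1 - \<alpha> - 1) * 1) / (1 - \<alpha>) = c / (1 + t) powr \<alpha>"
    using assms by (simp add: powr_minus divide_inverse)
  ultimately show ?thesis by simp
qed

lemma threshold:
  fixes c \<alpha> :: real
  assumes "c > 0" "\<alpha> < 1"
  obtains a where "a \<ge> 1" "\<And>t. t \<ge> a \<Longrightarrow> 2 * \<alpha> * (1 + t) powr (\<alpha> - 1) / c \<le> 1"
proof -
  have lim: "filterlim (\<lambda>t::real. 1 + t) at_top at_top" by (rule filterlim_tendsto_add_at_top[OF tendsto_const filterlim_ident])
  have "((\<lambda>t::real. (1 + t) powr (\<alpha> - 1)) \<longlongrightarrow> 0) at_top"
    by (rule tendsto_neg_powr[OF _ lim]) (use assms in auto)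
  then have "((\<lambda>t::real. 2 * \<alpha> * (1 + t) powr (\<alpha> - 1) / c) \<longlongrightarrow> 2 * \<alpha> * 0 / c) at_top"
    by (intro tendsto_intros) (use assms in auto)
  then have "eventually (\<lambda>t. 2 * \<alpha> * (1 + t) powr (\<alpha> - 1) / c < 1) at_top"
    by (rule order_tendstoD) simp
  then obtain N where N: "\<And>t. t \<ge> N \<Longrightarrow> 2 * \<alpha> * (1 + t) powr (\<alpha> - 1) / c < 1"
    unfolding eventually_at_top_linorder by blast
  show ?thesis by (rule that[of "max 1 N"]) (auto intro: less_imp_le N)
qed

lemma tail:
  fixes c \<alpha> a r T :: real
  assumes c: "c > 0" and al: "0 \<le> \<alpha>" "\<alpha> < 1" and a: "a \<ge> 0"
    and thr: "\<And>t. t \<ge> a \<Longrightarrow> 2 * \<alpha> * (1 + t) powr (\<alpha> - 1) / c \<le> 1"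
    and r: "a \<le> r" "r \<le> T"
  shows "exp (c * (1 + r) powr (1 - \<alpha>) / (1 - \<alpha>)) * integral {r..T} (\<lambda>t. 1 / exp (c * (1 + t) powr (1 - \<alpha>) / (1 - \<alpha>)))
     \<le> 2 * (1 + r) powr \<alpha> / c"
proof -
  define G where "G t = c * (1 + t) powr (1 - \<alpha>) / (1 - \<alpha>)" for t :: real
  define H where "H t = - (2 * (1 + t) powr \<alpha> / c) * exp (- G t)" for t :: real
  define H' where "H' t = exp (- G t) * (2 - 2 * \<alpha> * (1 + t) powr (\<alpha> - 1) / c)" for t :: real
  have Gd: "(G has_real_derivative c / (1 + t) powr \<alpha>) (at t within X)" if "t > -1" for t X
    unfolding G_def using G_deriv[OF al(2) that] .
  have Hd: "(H has_real_derivative H' t) (at t within {r..T})" if "t \<in> {r..T}" for t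
  proof -
    have t1: "t > -1" using that r a by auto
    have "DERIV (\<lambda>t. 1 + t) t :> 1" by (auto intro!: derivative_eq_intros)
    from DERIV_fun_powr[OF this, of \<alpha>] t1
    have p: "DERIV (\<lambda>x. (1 + x) powr \<alpha>) t :> \<alpha> * (1 + t) powr (\<alpha> - 1)" by simp
    have e: "DERIV (\<lambda>x. exp (- G x)) t :> exp (- G t) * (- (c / (1 + t) powr \<alpha>))"
      by (rule DERIV_fun_exp, rule DERIV_minus, rule Gd[OF t1])
    have m: "DERIV (\<lambda>x. (1 + x) powr \<alpha> * exp (- G x)) t :>
       \<alpha> * (1 + t) powr (\<alpha> - 1) * exp (- G t) + exp (- G t) * (- (c / (1 + t) powr \<alpha>)) * (1 + t) powr \<alpha>"
      by (rule DERIV_mult[OF p e])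
    have m2: "DERIV (\<lambda>x. (- (2 / c)) * ((1 + x) powr \<alpha> * exp (- G x))) t :>
       (- (2 / c)) * (\<alpha> * (1 + t) powr (\<alpha> - 1) * exp (- G t) + exp (- G t) * (- (c / (1 + t) powr \<alpha>)) * (1 + t) powr \<alpha>)"
      by (rule DERIV_cmult[OF m])
    have eqH: "H = (\<lambda>x. (- (2 / c)) * ((1 + x) powr \<alpha> * exp (- G x)))"
      unfolding H_def by (auto simp: fun_eq_iff)
    have eqD: "(- (2 / c)) * (\<alpha> * (1 + t) powr (\<alpha> - 1) * exp (- G t) + exp (- G t) * (- (c / (1 + t) powr \<alpha>)) * (1 + t) powr \<alpha>) = H' t"
      unfolding H'_def using t1 c by (simp add: field_simps)
    show ?thesis using m2 unfolding eqH eqD by (rule has_field_derivative_at_within)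
  qed
  have HI: "(H' has_integral H T - H r) {r..T}"
    by (rule fundamental_theorem_of_calculus[OF r(2)]) (use Hd in \<open>auto simp: has_real_derivative_iff_has_vector_derivative\<close>)
  have cont: "continuous_on {r..T} (\<lambda>t. 1 / exp (G t))"
    unfolding G_def using r a al by (intro continuous_intros) auto
  have le: "1 / exp (G t) \<le> H' t" if "t \<in> {r..T}" for t
  proof -
    have "2 * \<alpha> * (1 + t) powr (\<alpha> - 1) / c \<le> 1" using thr that r by auto
    then have "1 \<le> 2 - 2 * \<alpha> * (1 + t) powr (\<alpha> - 1) / c" by simp
    then show ?thesis unfolding H'_def by (simp add: exp_minus divide_inverse)
  qed
  have "integral {r..T} (\<lambda>t. 1 / exp (G t)) \<le> H T - H r"
    by (rule has_integral_le[OF integrable_integral[OF integrable_continuous_real[OF cont]] HI le])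
  also have "\<dots> \<le> - H r" unfolding H_def using c by simp
  finally have "exp (G r) * integral {r..T} (\<lambda>t. 1 / exp (G t)) \<le> exp (G r) * - H r" by (intro mult_left_mono) auto
  also have "\<dots> = 2 * (1 + r) powr \<alpha> / c" unfolding H_def by (simp add: exp_minus)
  finally show ?thesis unfolding G_def .
qed



theorem lemma3:
  fixes y y' y'' \<omega> :: "real \<Rightarrow> 'a::{real_inner, complete_space}"
    and c \<alpha> :: real
  assumes c_pos: "c > 0"
    and alpha: "0 \<le> \<alpha>" "\<alpha> < 1"
    and \<omega>_meas: "\<omega> \<in> borel_measurable (lebesgue_on {0..})"
    and \<omega>_int: "(\<lambda>t. norm (\<omega> t) / (c / (1 + t) powr \<alpha>)) integrable_on {0..}"
    and W21loc: "\<And>s t. 0 < s \<Longrightarrow> s \<le> t \<Longrightarrow>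
         (y' has_integral (y t - y s)) {s..t}
       \<and> (y'' has_integral (y' t - y' s)) {s..t}
       \<and> (\<lambda>u. norm (y'' u)) integrable_on {s..t}"
    and ode: "AE t in lebesgue. t > 0 \<longrightarrow> y'' t + (c / (1 + t) powr \<alpha>) *\<^sub>R y' t = \<omega> t"
  shows "\<exists>L. (y \<longlongrightarrow> L) at_top"
proof -
  define \<gamma> where "\<gamma> t = c / (1 + t) powr \<alpha>" for t :: real
  define \<Gamma> where "\<Gamma> t = exp (c * (1 + t) powr (1 - \<alpha>) / (1 - \<alpha>))" for t :: real
  define m where "m t = norm (\<omega> t)" for t
  define n where "n t = m t / \<gamma> t" for t
  obtain a where a1: "a \<ge> 1" and thr: "\<And>t. t \<ge> a \<Longrightarrow> 2 * \<alpha> * (1 + t) powr (\<alpha> - 1) / c \<le> 1"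
    using threshold[OF c_pos alpha(2)] by blast
  have gpos: "0 < \<gamma> t" if "t \<ge> 0" for t unfolding \<gamma>_def using c_pos that by simp
  have gle: "\<gamma> t \<le> c" if "t \<ge> 0" for t unfolding \<gamma>_def using gam_le[OF c_pos alpha(1) that] .
  have Gpos: "0 < \<Gamma> t" for t unfolding \<Gamma>_def by simp
  have GD: "(\<Gamma> has_real_derivative \<gamma> t * \<Gamma> t) (at t within X)" if "t > -1" for t X
  proof -
    have "DERIV \<Gamma> t :> \<Gamma> t * \<gamma> t"
      unfolding \<Gamma>_def \<gamma>_def by (rule DERIV_fun_exp[OF G_deriv[OF alpha(2) that]])
    then show ?thesis by (simp add: mult.commute has_field_derivative_at_within)
  qed
  have gcont: "continuous_on {x..z} \<gamma>" if "x \<ge> 0" for x z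
    unfolding \<gamma>_def using that c_pos by (intro continuous_intros) auto
  have Gcont: "continuous_on {x..z} \<Gamma>" if "x \<ge> 0" for x z
    unfolding \<Gamma>_def using that alpha by (intro continuous_intros) auto
  have yc: "continuous_on {s..t} y'" if "0 < s" for s t
  proof (cases "s \<le> t")
    case False then show ?thesis by simp
  next
    case True
    define Q where "Q u = integral {s..u} (\<lambda>x. norm (y'' x))" for u
    have Qi: "(\<lambda>x. norm (y'' x)) integrable_on {s..t}" using W21loc[OF that True] by blast
    have Qc: "continuous_on {s..t} Q" unfolding Q_def by (rule indefinite_integral_continuous_1[OF Qi])
    have le: "norm (y' u - y' v) \<le> Q u - Q v" if uv: "v \<in> {s..t}" "u \<in> {s..t}" "v \<le> u" for u v
    proof -
      have v0: "0 < v" using uv \<open>0 < s\<close> by auto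
      have "norm (y' u - y' v) \<le> integral {v..u} (\<lambda>x. norm (y'' x))"
        by (rule int_norm_bound) (use W21loc[OF v0 uv(3)] in auto)
      also have "\<dots> = Q u - Q v"
        unfolding Q_def using Henstock_Kurzweil_Integration.integral_combine[of s v u "\<lambda>x. norm (y'' x)"]
          integrable_on_subinterval[OF Qi, of s u] uv by auto
      finally show ?thesis .
    qed
    show ?thesis
    proof (rule cont_dom[OF Qc])
      fix u v assume uv: "u \<in> {s..t}" "v \<in> {s..t}"
      show "dist (y' u) (y' v) \<le> dist (Q u) (Q v)"
      proof (cases "v \<le> u")
        case True then show ?thesis using le[of v u] uv by (auto simp: dist_norm)
      next
        case False then show ?thesis using le[of u v] uv by (auto simp: dist_norm norm_minus_commute)
      qed
    qed
  qed
  obtain N where negN: "negligible N" and ode': "\<And>u. u > 0 \<Longrightarrow> u \<notin> N \<Longrightarrow> y'' u + \<gamma> u *\<^sub>R y' u = \<omega> u"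
  proof -
    from AE_E[OF ode] obtain N where N: "{x \<in> space lebesgue. \<not> (x > 0 \<longrightarrow> y'' x + (c / (1 + x) powr \<alpha>) *\<^sub>R y' x = \<omega> x)} \<subseteq> N"
      "emeasure lebesgue N = 0" "N \<in> sets lebesgue" by blast
    have "negligible N" using N(2,3) by (simp add: negligible_iff_null_sets null_setsI)
    moreover have "y'' u + \<gamma> u *\<^sub>R y' u = \<omega> u" if "u > 0" "u \<notin> N" for u
      using N(1) that unfolding \<gamma>_def by auto
    ultimately show ?thesis using that by blast
  qed
  have R3: "((\<lambda>v. \<omega> v - \<gamma> v *\<^sub>R y' v) has_integral (y' t - y' s)) {s..t}" if "0 < s" "s \<le> t" for s t
  proof (rule has_integral_spike[OF negN _ conjunct1[OF conjunct2[OF W21loc[OF that]]]])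
    fix x assume "x \<in> {s..t} - N"
    then show "\<omega> x - \<gamma> x *\<^sub>R y' x = y'' x" using ode'[of x] that by (auto simp: algebra_simps)
  qed
  have nabs: "n absolutely_integrable_on {0..}"
  proof (rule nonnegative_absolutely_integrable_1)
    show "n integrable_on {0..}" using \<omega>_int unfolding n_def m_def \<gamma>_def .
    show "0 \<le> n x" if "x \<in> {0..}" for x using gpos[of x] that unfolding n_def m_def by simp
  qed
  have nnn: "0 \<le> n x" if "x \<ge> 0" for x using gpos[of x] that unfolding n_def m_def by simp
  have nint: "n integrable_on {x..z}" if "0 \<le> x" for x z
  proof -
    have "n absolutely_integrable_on {x..z}" by (rule set_integrable_subset[OF nabs]) (use that in auto)
    then show ?thesis using set_lebesgue_integral_eq_integral(1) by blast
  qed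
  have nle: "integral {x..z} n \<le> integral {0..} n" if "0 \<le> x" for x z
    by (rule integral_subset_le) (use that nint nnn set_lebesgue_integral_eq_integral(1)[OF nabs] in auto)
  have mabs: "m absolutely_integrable_on {x..z}" if "0 \<le> x" for x z
  proof (rule measurable_bounded_by_integrable_imp_absolutely_integrable)
    have "\<omega> \<in> borel_measurable (lebesgue_on {x..z})"
      by (rule measurable_restrict_mono[OF \<omega>_meas]) (use that in auto)
    then show "m \<in> borel_measurable (lebesgue_on {x..z})" unfolding m_def by measurable
    show "(\<lambda>u. c * n u) integrable_on {x..z}" using integrable_cmul[OF nint[OF that], of c] by simp
    show "norm (m u) \<le> c * n u" if "u \<in> {x..z}" for u
    proof -
      have u0: "u \<ge> 0" using that \<open>0 \<le> x\<close> by auto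
      have "m u = \<gamma> u * n u" unfolding n_def using gpos[OF u0] by simp
      then show ?thesis using gle[OF u0] nnn[OF u0] gpos[OF u0] by (simp add: m_def mult_right_mono abs_mult)
    qed
  qed auto
  define P where "P t = integral {a..t} (\<lambda>r. \<Gamma> r * m r)" for t
  have a0: "0 < a" using a1 by simp
  have Pnn: "0 \<le> P t" if "a \<le> t" for t
  proof -
    have "(\<lambda>r. \<Gamma> r * m r) absolutely_integrable_on {a..t}"
      by (rule cont_mult_abs[OF Gcont mabs]) (use a0 in auto)
    then show ?thesis unfolding P_def using Gpos
      by (intro integral_nonneg) (auto simp: m_def set_lebesgue_integral_eq_integral(1) less_imp_le)
  qed
  have pt: "\<Gamma> t * norm (y' t) \<le> \<Gamma> a * norm (y' a) + P t" if at: "a \<le> t" for t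
  proof -
    define e where "e = y' t"
    have sb: "\<Gamma> t * inner e (y' t) \<le> \<Gamma> a * \<bar>inner e (y' a)\<bar> + norm e * integral {a..t} (\<lambda>r. \<Gamma> r * m r)"
    proof (rule scalar_bound[where w = "\<lambda>v. inner e (\<omega> v)" and \<gamma> = \<gamma>])
      show "a \<le> t" by (rule at)
      show "continuous_on {a..t} \<gamma>" using gcont a0 by auto
      show "(\<Gamma> has_real_derivative \<gamma> x * \<Gamma> x) (at x within {a..t})" if "x \<in> {a..t}" for x
        using GD[of x] that a0 by auto
      show "continuous_on {a..t} (\<lambda>v. inner e (y' v))"
        using yc[OF a0, of t] by (auto intro!: continuous_intros)
      show "((\<lambda>v. inner e (\<omega> v) - \<gamma> v * inner e (y' v)) has_integral (inner e (y' s) - inner e (y' a))) {a..s}"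
        if "s \<in> {a..t}" for s
        using has_integral_linear[OF R3[OF a0, of s] bounded_linear_inner_right[of e]] that
        by (simp add: o_def inner_diff_right)
      show "m absolutely_integrable_on {a..t}" using mabs a0 by auto
      show "\<bar>inner e (\<omega> v)\<bar> \<le> norm e * m v" for v unfolding m_def by (rule Cauchy_Schwarz_ineq2)
      show "0 \<le> \<gamma> x" if "x \<in> {a..t}" for x using gpos[of x] that a0 by auto
      show "0 < \<Gamma> x" for x by (rule Gpos)
    qed simp
    have i1: "inner e (y' t) = norm e * norm e" unfolding e_def by (simp add: dot_square_norm power2_eq_square)
    have i2: "\<bar>inner e (y' a)\<bar> \<le> norm e * norm (y' a)" by (rule Cauchy_Schwarz_ineq2)
    have "\<Gamma> t * (norm e * norm e) \<le> norm e * (\<Gamma> a * norm (y' a) + P t)"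
    proof -
      have "\<Gamma> a * \<bar>inner e (y' a)\<bar> \<le> \<Gamma> a * (norm e * norm (y' a))"
        using i2 Gpos[of a] by (intro mult_left_mono) auto
      then show ?thesis using sb i1 unfolding P_def by (simp add: algebra_simps)
    qed
    then have "norm e * (\<Gamma> t * norm e) \<le> norm e * (\<Gamma> a * norm (y' a) + P t)" by (simp add: algebra_simps)
    then show ?thesis
      using Pnn[OF at] Gpos[of a] unfolding e_def
      by (cases "norm (y' t) = 0") (auto simp: mult_le_cancel_left)
  qed
  define \<phi> where "\<phi> T = integral {a..T} (\<lambda>t. norm (y' t))" for T
  define A where "A r = 2 * (1 + r) powr \<alpha> / c" for r :: real
  have tl: "\<Gamma> r * integral {r..T} (\<lambda>t. 1 / \<Gamma> t) \<le> A r" if "a \<le> r" "r \<le> T" for r T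
    unfolding \<Gamma>_def A_def by (rule tail[OF c_pos alpha _ thr that]) (use a0 in auto)
  define K0 where "K0 = \<Gamma> a * norm (y' a)"
  have K0: "0 \<le> K0" unfolding K0_def using Gpos[of a] by simp
  have Bd: "\<phi> T \<le> K0 * (A a / \<Gamma> a) + 2 * integral {0..} n" if aT: "a \<le> T" for T
  proof -
    have ync: "continuous_on {a..T} (\<lambda>t. norm (y' t))" using yc[OF a0] by (auto intro!: continuous_intros)
    have ic: "continuous_on {a..T} (\<lambda>t. 1 / \<Gamma> t)" using Gcont[of a T] a0 Gpos by (auto intro!: continuous_intros simp: less_imp_neq[symmetric])
    have fabs: "(\<lambda>r. \<Gamma> r * m r) absolutely_integrable_on {a..T}"
      by (rule cont_mult_abs[OF Gcont mabs]) (use a0 in auto)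
    have Pc: "continuous_on {a..T} P" unfolding P_def
      by (rule indefinite_integral_continuous_1) (use fabs set_lebesgue_integral_eq_integral(1) in blast)
    have "\<phi> T \<le> integral {a..T} (\<lambda>t. K0 * (1 / \<Gamma> t) + 1 / \<Gamma> t * P t)"
      unfolding \<phi>_def
    proof (rule integral_le)
      show "(\<lambda>t. norm (y' t)) integrable_on {a..T}" by (rule integrable_continuous_real[OF ync])
      show "(\<lambda>t. K0 * (1 / \<Gamma> t) + 1 / \<Gamma> t * P t) integrable_on {a..T}"
        by (rule integrable_continuous_real) (intro continuous_on_add continuous_on_mult continuous_on_const ic Pc)
      fix t assume "t \<in> {a..T}"
      then have "\<Gamma> t * norm (y' t) \<le> K0 + P t" using pt[of t] unfolding K0_def by auto
      then show "norm (y' t) \<le> K0 * (1 / \<Gamma> t) + 1 / \<Gamma> t * P t"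
        using Gpos[of t] by (simp add: field_simps)
    qed
    also have "\<dots> = K0 * integral {a..T} (\<lambda>t. 1 / \<Gamma> t) + integral {a..T} (\<lambda>t. 1 / \<Gamma> t * P t)"
    proof -
      have it: "(\<lambda>t. 1 / \<Gamma> t) integrable_on {a..T}" by (rule integrable_continuous_real[OF ic])
      have i1: "(\<lambda>t. K0 * (1 / \<Gamma> t)) integrable_on {a..T}" using integrable_cmul[OF it, where c=K0] by simp
      have i2: "(\<lambda>t. 1 / \<Gamma> t * P t) integrable_on {a..T}"
        by (rule integrable_continuous_real) (intro continuous_on_add continuous_on_mult continuous_on_const ic Pc)
      have e: "integral {a..T} (\<lambda>t. K0 * (1 / \<Gamma> t)) = K0 * integral {a..T} (\<lambda>t. 1 / \<Gamma> t)"
        using integral_cmul[where c=K0 and f="\<lambda>t. 1 / \<Gamma> t" and S="{a..T}"] by simp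
      show ?thesis using integral_add[OF i1 i2] e by simp
    qed
    also have "K0 * integral {a..T} (\<lambda>t. 1 / \<Gamma> t) \<le> K0 * (A a / \<Gamma> a)"
    proof -
      have "\<Gamma> a * integral {a..T} (\<lambda>t. 1 / \<Gamma> t) \<le> A a" by (rule tl[OF order.refl aT])
      then have "integral {a..T} (\<lambda>t. 1 / \<Gamma> t) \<le> A a / \<Gamma> a" using Gpos[of a] by (simp add: field_simps)
      then show ?thesis using K0 by (rule mult_left_mono)
    qed
    also have "integral {a..T} (\<lambda>t. 1 / \<Gamma> t * P t) \<le> 2 * integral {0..} n"
    proof -
      have "integral {a..T} (\<lambda>t. 1 / \<Gamma> t * P t) = integral {a..T} (\<lambda>r. (\<Gamma> r * m r) * integral {r..T} (\<lambda>t. 1 / \<Gamma> t))"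
        unfolding P_def by (rule swap_abs[OF aT fabs ic])
      also have "\<dots> \<le> integral {a..T} (\<lambda>r. 2 * n r)"
      proof (rule integral_le)
        have hc: "continuous_on {a..T} (\<lambda>r. integral {r..T} (\<lambda>t. 1 / \<Gamma> t))"
          by (rule indefinite_integral_continuous_1', rule integrable_continuous_real[OF ic])
        show "(\<lambda>r. (\<Gamma> r * m r) * integral {r..T} (\<lambda>t. 1 / \<Gamma> t)) integrable_on {a..T}"
          using set_lebesgue_integral_eq_integral(1)[OF cont_mult_abs[OF hc fabs]] by (simp add: mult.commute)
        show "(\<lambda>r. 2 * n r) integrable_on {a..T}" using integrable_cmul[OF nint[of a T], of 2] a0 by simp
        fix r assume r: "r \<in> {a..T}"
        have r0: "0 \<le> r" using r a0 by auto
        have "\<Gamma> r * integral {r..T} (\<lambda>t. 1 / \<Gamma> t) \<le> A r" using tl[of r T] r by auto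
        then have "m r * (\<Gamma> r * integral {r..T} (\<lambda>t. 1 / \<Gamma> t)) \<le> m r * A r"
          by (rule mult_left_mono) (simp add: m_def)
        moreover have "m r * A r = 2 * n r" unfolding A_def n_def \<gamma>_def using c_pos by (simp add: field_simps)
        ultimately show "(\<Gamma> r * m r) * integral {r..T} (\<lambda>t. 1 / \<Gamma> t) \<le> 2 * n r" by (simp add: algebra_simps)
      qed
      also have "\<dots> = 2 * integral {a..T} n" by simp
      also have "\<dots> \<le> 2 * integral {0..} n" using nle[of a T] a0 by simp
      finally show ?thesis .
    qed
    finally show ?thesis by simp
  qed
  have ydiff: "norm (y t - y s) \<le> \<phi> t - \<phi> s" if st: "a \<le> s" "s \<le> t" for s t
  proof -
    have s0: "0 < s" using st a0 by simp
    have ync: "continuous_on {a..t} (\<lambda>t. norm (y' t))" using yc[OF a0] by (auto intro!: continuous_intros)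
    have "norm (y t - y s) \<le> integral {s..t} (\<lambda>x. norm (y' x))"
    proof (rule int_norm_bound)
      show "(y' has_integral y t - y s) {s..t}" using W21loc[OF s0 st(2)] by blast
      show "(\<lambda>x. norm (y' x)) integrable_on {s..t}"
        by (rule integrable_continuous_real, rule continuous_on_subset[OF ync]) (use st in auto)
    qed
    also have "\<dots> = \<phi> t - \<phi> s"
      unfolding \<phi>_def using Henstock_Kurzweil_Integration.integral_combine[of a s t "\<lambda>x. norm (y' x)"]
        integrable_continuous_real[OF ync] st by auto
    finally show ?thesis .
  qed
  define \<Phi> where "\<Phi> = Sup (\<phi> ` {a..})"
  have bdd: "bdd_above (\<phi> ` {a..})" using Bd by (auto intro!: bdd_aboveI2)
  have phile: "\<phi> t \<le> \<Phi>" if "a \<le> t" for t unfolding \<Phi>_def by (rule cSup_upper[OF _ bdd]) (use that in auto)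
  have phimono: "\<phi> s \<le> \<phi> t" if "a \<le> s" "s \<le> t" for s t
    using ydiff[OF that] norm_ge_zero[of "y t - y s"] by linarith
  have "cauchy_filter (filtermap y at_top)"
    unfolding cauchy_filter_metric_filtermap
  proof (intro allI impI)
    fix e :: real assume e: "e > 0"
    have "\<Phi> - e < Sup (\<phi> ` {a..})" using e unfolding \<Phi>_def by simp
    then obtain T0 where T0: "T0 \<ge> a" "\<Phi> - e < \<phi> T0"
      using less_cSup_iff[OF _ bdd] by force
    show "\<exists>P. eventually P at_top \<and> (\<forall>x z. P x \<and> P z \<longrightarrow> dist (y x) (y z) < e)"
    proof (intro exI conjI allI impI)
      show "eventually (\<lambda>x. T0 \<le> x) at_top" by (rule eventually_ge_at_top)
      fix x z assume xz: "T0 \<le> x \<and> T0 \<le> z"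
      have key: "norm (y v - y u) < e" if "T0 \<le> u" "u \<le> v" for u v
      proof -
        have "norm (y v - y u) \<le> \<phi> v - \<phi> u" using ydiff[of u v] that T0 by auto
        also have "\<dots> \<le> \<Phi> - \<phi> T0" using phile[of v] phimono[of T0 u] that T0 by auto
        finally show ?thesis using T0 by linarith
      qed
      show "dist (y x) (y z) < e"
      proof (cases "x \<le> z")
        case True then show ?thesis using key[of x z] xz by (simp add: dist_norm norm_minus_commute)
      next
        case False then show ?thesis using key[of z x] xz by (simp add: dist_norm)
      qed
    qed
  qed
  then obtain L where "filtermap y at_top \<le> nhds L"
    using cauchy_filter_complete_converges[of "filtermap y at_top" UNIV] complete_UNIV
    by (auto simp: filtermap_bot_iff)
  then show ?thesis unfolding filterlim_def by blast
qed

end
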